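(* Let $k\ge 2$ and let $G$ be a $k$-connected graph. Let $H\subset G$ be a minimum spanning $k$-connected subgraph of $G$. Then \[ mc_k(G)\ge e(G)-e(H)+h_k(G)\ge e(G)-e(H)+1. \]
   Context: All graphs are finite, simple and undirected. A graph is $k$-connected if it has at least $k+1$ vertices and remains connected after deleting any at most $k-1$ vertices. Paths are called disjoint if they are internally vertex-disjoint. An edge-coloured path is monochromatic if all its edges have the same colour. For a $k$-connected graph $G$, an edge-colouring is monochromatic $k$-connected if any two vertices are connected by $k$ disjoint monochromatic paths; $mc_k(G)$ is the maximum number of colours in a monochromatic $k$-connected colouring of $G$. A minimum spanning $k$-connected subgraph of $G$ is a $k$-connected subgraph $H$ with $V(H)=V(G)$ and $e(H)$ minimum among such subgraphs. $h_k(G)=\max\{mc_k(H): H \text{ is a minimum spanning } k\text{-connected subgraph of } G\}$. *)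

theory Defs
  imports Main
begin

definition simple_graph :: "'a set \<Rightarrow> 'a set set \<Rightarrow> bool" where
  "simple_graph V E \<longleftrightarrow> finite V \<and>
     (\<forall>e\<in>E. \<exists>x y. x \<noteq> y \<and> x \<in> V \<and> y \<in> V \<and> e = {x, y})"

definition is_path :: "'a set \<Rightarrow> 'a set set \<Rightarrow> 'a list \<Rightarrow> 'a \<Rightarrow> 'a \<Rightarrow> bool" where
  "is_path V E xs u v \<longleftrightarrow> xs \<noteq> [] \<and> hd xs = u \<and> last xs = v \<and> distinct xs \<and>
     set xs \<subseteq> V \<and> (\<forall>i. Suc i < length xs \<longrightarrow> {xs ! i, xs ! Suc i} \<in> E)"

definition path_edges :: "'a list \<Rightarrow> 'a set set" where
  "path_edges xs = {{xs ! i, xs ! Suc i} | i. Suc i < length xs}"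

definition interior :: "'a list \<Rightarrow> 'a set" where
  "interior xs = set (butlast (tl xs))"

definition connected_graph :: "'a set \<Rightarrow> 'a set set \<Rightarrow> bool" where
  "connected_graph V E \<longleftrightarrow> (\<forall>u\<in>V. \<forall>v\<in>V. \<exists>xs. is_path V E xs u v)"

definition k_connected :: "'a set \<Rightarrow> 'a set set \<Rightarrow> nat \<Rightarrow> bool" where
  "k_connected V E k \<longleftrightarrow> card V \<ge> k + 1 \<and>
     (\<forall>S. S \<subseteq> V \<and> card S \<le> k - 1 \<longrightarrow>
        connected_graph (V - S) {e\<in>E. e \<inter> S = {}})"

definition mono_k_conn :: "'a set \<Rightarrow> 'a set set \<Rightarrow> nat \<Rightarrow> ('a set \<Rightarrow> nat) \<Rightarrow> bool" where
  "mono_k_conn V E k c \<longleftrightarrow>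
     (\<forall>u\<in>V. \<forall>v\<in>V. u \<noteq> v \<longrightarrow>
        (\<exists>P. card P = k \<and>
           (\<forall>xs\<in>P. is_path V E xs u v \<and> (\<exists>col. \<forall>e\<in>path_edges xs. c e = col)) \<and>
           (\<forall>xs\<in>P. \<forall>ys\<in>P. xs \<noteq> ys \<longrightarrow> interior xs \<inter> interior ys = {})))"

definition mc :: "'a set \<Rightarrow> 'a set set \<Rightarrow> nat \<Rightarrow> nat" where
  "mc V E k = Max {card (c ` E) | c. mono_k_conn V E k c}"

definition min_spanning_k_conn :: "'a set \<Rightarrow> 'a set set \<Rightarrow> nat \<Rightarrow> 'a set set \<Rightarrow> bool" where
  "min_spanning_k_conn V E k F \<longleftrightarrow> F \<subseteq> E \<and> k_connected V F k \<and>
     (\<forall>F'. F' \<subseteq> E \<and> k_connected V F' k \<longrightarrow> card F \<le> card F')"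

definition h :: "'a set \<Rightarrow> 'a set set \<Rightarrow> nat \<Rightarrow> nat" where
  "h V E k = Max {mc V F k | F. min_spanning_k_conn V E k F}"

end

theory Submission
  imports Defs
begin

inductive reach :: "'a set set \<Rightarrow> 'a set \<Rightarrow> 'a \<Rightarrow> 'a \<Rightarrow> bool" for E W where
  rrefl: "a \<in> W \<Longrightarrow> reach E W a a"
| rstep: "reach E W a b \<Longrightarrow> {b, c} \<in> E \<Longrightarrow> c \<in> W \<Longrightarrow> reach E W a c"

lemma reach_W: "reach E W a b \<Longrightarrow> a \<in> W \<and> b \<in> W"
  by (induction rule: reach.induct) auto

lemma reach_trans: "reach E W b c \<Longrightarrow> reach E W a b \<Longrightarrow> reach E W a c"
  by (induction rule: reach.induct) (auto intro: reach.rstep)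

lemma reach_mono: "reach E W a b \<Longrightarrow> E \<subseteq> E2 \<Longrightarrow> W \<subseteq> W2 \<Longrightarrow> reach E2 W2 a b"
  by (induction rule: reach.induct) (auto intro: reach.intros)

lemma reach_sym: "reach E W a b \<Longrightarrow> reach E W b a"
proof (induction rule: reach.induct)
  case (rrefl a) then show ?case by (simp add: reach.rrefl)
next
  case (rstep a b c)
  have "reach E W c b" using rstep reach_W[OF rstep.hyps(1)]
    by (metis insert_commute reach.rrefl reach.rstep)
  then show ?case using rstep.IH reach_trans by metis
qed

lemma reach_empty: "reach {} W a b \<Longrightarrow> a = b"
  by (induction rule: reach.induct) auto

fun ewalk :: "'a set set \<Rightarrow> 'a list \<Rightarrow> bool" where
  "ewalk E [] = True"
| "ewalk E [x] = True"
| "ewalk E (x # y # xs) = ({x, y} \<in> E \<and> ewalk E (y # xs))"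

lemma ewalk_nth: "ewalk E xs \<longleftrightarrow> (\<forall>i. Suc i < length xs \<longrightarrow> {xs ! i, xs ! Suc i} \<in> E)"
proof (induction E xs rule: ewalk.induct)
  case (3 E x y xs)
  show ?case
  proof
    assume "ewalk E (x # y # xs)"
    then show "\<forall>i. Suc i < length (x # y # xs) \<longrightarrow> {(x # y # xs) ! i, (x # y # xs) ! Suc i} \<in> E"
      using 3 by (auto simp: nth_Cons split: nat.splits)
  next
    assume h: "\<forall>i. Suc i < length (x # y # xs) \<longrightarrow> {(x # y # xs) ! i, (x # y # xs) ! Suc i} \<in> E"
    have "{x,y} \<in> E" using h[rule_format, of 0] by simp
    moreover have "\<forall>i. Suc i < length (y # xs) \<longrightarrow> {(y # xs) ! i, (y # xs) ! Suc i} \<in> E"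
      using h[rule_format, of "Suc _"] by simp
    ultimately show "ewalk E (x # y # xs)" using 3 by simp
  qed
qed auto

lemma ewalk_app: "ewalk E (xs @ [t]) \<Longrightarrow> ewalk E (t # r) \<Longrightarrow> ewalk E (xs @ t # r)"
  by (induction E xs rule: ewalk.induct) auto

lemma ewalk_append2: "ewalk E xs \<Longrightarrow> ewalk E ys \<Longrightarrow> xs \<noteq> [] \<Longrightarrow> ys \<noteq> []
   \<Longrightarrow> {last xs, hd ys} \<in> E \<Longrightarrow> ewalk E (xs @ ys)"
  by (induction E xs rule: ewalk.induct) (auto simp: neq_Nil_conv)

lemma ewalk_prefix: "ewalk E (xs @ ys) \<Longrightarrow> ewalk E xs"
  by (induction E xs rule: ewalk.induct) auto

lemma ewalk_tl: "ewalk E xs \<Longrightarrow> ewalk E (tl xs)"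
  by (induction E xs rule: ewalk.induct) auto

lemma ewalk_mono: "ewalk E xs \<Longrightarrow> E \<subseteq> E2 \<Longrightarrow> ewalk E2 xs"
  by (induction E xs rule: ewalk.induct) auto

lemma ewalk_rev: "ewalk E xs \<Longrightarrow> ewalk E (rev xs)"
proof (induction E xs rule: ewalk.induct)
  case (3 E x y xs)
  then have "ewalk E (rev xs @ [y])" by simp
  moreover have "ewalk E [y, x]" using 3 by (simp add: insert_commute)
  ultimately show ?case using ewalk_app[of E "rev xs" y "[x]"] by simp
qed auto

definition lp :: "'a set set \<Rightarrow> 'a set \<Rightarrow> 'a list \<Rightarrow> bool" where
  "lp E W p \<longleftrightarrow> p \<noteq> [] \<and> distinct p \<and> set p \<subseteq> W \<and> ewalk E p"

lemma lp_rev: "lp E W p \<Longrightarrow> lp E W (rev p)"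
  unfolding lp_def using ewalk_rev by auto

fun cutB :: "'a set \<Rightarrow> 'a list \<Rightarrow> 'a list" where
  "cutB T [] = []"
| "cutB T (x # xs) = (if x \<in> T then [x] else x # cutB T xs)"

lemma cutB_prefix: "\<exists>r. xs = cutB T xs @ r"
  by (induction xs) auto

lemma cutB_props:
  assumes "set xs \<inter> T \<noteq> {}"
  shows "cutB T xs \<noteq> [] \<and> hd (cutB T xs) = hd xs \<and> last (cutB T xs) \<in> T
     \<and> set (cutB T xs) \<inter> T = {last (cutB T xs)}"
  using assms
proof (induction xs)
  case (Cons x xs)
  show ?case
  proof (cases "x \<in> T")
    case False
    then have "set xs \<inter> T \<noteq> {}" using Cons.prems by auto
    with Cons.IH False show ?thesis by auto
  qed auto
qed simp

lemma cutB_lp: "lp E W xs \<Longrightarrow> set xs \<inter> T \<noteq> {} \<Longrightarrow> lp E W (cutB T xs)"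
proof -
  assume a: "lp E W xs" "set xs \<inter> T \<noteq> {}"
  obtain r where r: "xs = cutB T xs @ r" using cutB_prefix by blast
  then show ?thesis using a cutB_props[OF a(2)] unfolding lp_def
    by (metis distinct_append ewalk_prefix le_sup_iff set_append)
qed

definition cutA :: "'a set \<Rightarrow> 'a list \<Rightarrow> 'a list" where
  "cutA T xs = rev (cutB T (rev xs))"

lemma cutA_props:
  assumes "set xs \<inter> T \<noteq> {}"
  shows "cutA T xs \<noteq> [] \<and> last (cutA T xs) = last xs \<and> hd (cutA T xs) \<in> T
     \<and> set (cutA T xs) \<inter> T = {hd (cutA T xs)} \<and> set (cutA T xs) \<subseteq> set xs"
proof -
  have s: "set (rev xs) \<inter> T \<noteq> {}" using assms by simp
  note c = cutB_props[OF s]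
  obtain r where r: "rev xs = cutB T (rev xs) @ r" using cutB_prefix by blast
  have "set (cutB T (rev xs)) \<subseteq> set xs" using r by (metis Un_upper1 set_append set_rev)
  moreover have "hd (rev xs) = last xs" using assms by (simp add: hd_rev)
  ultimately show ?thesis using c unfolding cutA_def by (simp add: hd_rev last_rev)
qed

lemma cutA_lp: "lp E W xs \<Longrightarrow> set xs \<inter> T \<noteq> {} \<Longrightarrow> lp E W (cutA T xs)"
  unfolding cutA_def using cutB_lp[of E W "rev xs" T] lp_rev by fastforce

lemma cutB_sub: "set (cutB T xs) \<subseteq> set xs"
  using cutB_prefix by (metis Un_upper1 set_append)

lemma fam_map:
  assumes dj: "\<forall>p\<in>P. \<forall>q\<in>P. p \<noteq> q \<longrightarrow> set p \<inter> set q = {}"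
    and g: "\<forall>p\<in>P. g p \<noteq> [] \<and> set (g p) \<subseteq> set p"
  shows "card (g ` P) = card P \<and> (\<forall>p\<in>g`P. \<forall>q\<in>g`P. p \<noteq> q \<longrightarrow> set p \<inter> set q = {})"
proof -
  have "inj_on g P"
  proof (rule inj_onI)
    fix p q assume pq: "p \<in> P" "q \<in> P" "g p = g q"
    show "p = q"
    proof (rule ccontr)
      assume "p \<noteq> q"
      then have "set p \<inter> set q = {}" using dj pq by blast
      moreover have "set (g p) \<subseteq> set p" "set (g q) \<subseteq> set q" "g p \<noteq> []" using g pq(1,2) by auto
      ultimately show False using pq(3) by (metis disjoint_iff in_mono last_in_set)
    qed
  qed
  moreover have "\<forall>p\<in>g`P. \<forall>q\<in>g`P. p \<noteq> q \<longrightarrow> set p \<inter> set q = {}"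
  proof (intro ballI impI)
    fix p q assume "p \<in> g ` P" "q \<in> g ` P" "p \<noteq> q"
    then obtain p0 q0 where "p0 \<in> P" "q0 \<in> P" "p = g p0" "q = g q0" "p0 \<noteq> q0" by blast
    then show "set p \<inter> set q = {}" using dj g by blast
  qed
  ultimately show ?thesis by (simp add: card_image)
qed

lemma set_tl_sub: "set (tl xs) \<subseteq> set xs"
  by (cases xs) auto

lemma ewalk_reach_prefix:
  assumes "ewalk E p" "i < length p" "\<forall>j\<le>i. p ! j \<in> W"
  shows "reach E W (hd p) (p ! i)"
  using assms
proof (induction i)
  case 0 then show ?case by (simp add: hd_conv_nth reach.rrefl)
next
  case (Suc i)
  have h1: "reach E W (hd p) (p ! i)" using Suc.IH Suc.prems by simp
  have h2: "{p ! i, p ! Suc i} \<in> E" using Suc.prems(1,2) by (simp add: ewalk_nth)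
  have h3: "p ! Suc i \<in> W" using Suc.prems(3) by simp
  show ?case by (rule reach.rstep[OF h1 h2 h3])
qed

lemma lp_reach_pre:
  assumes "lp E W p" "set p \<inter> T = {last p}" "z \<in> set p" "z \<noteq> last p"
  shows "reach E (W - T) (hd p) z"
proof -
  obtain i where i: "i < length p" "p ! i = z" using assms(3) by (auto simp: in_set_conv_nth)
  have ne: "p \<noteq> []" "distinct p" "set p \<subseteq> W" "ewalk E p" using assms(1) unfolding lp_def by auto
  have lst: "last p = p ! (length p - 1)" using ne by (simp add: last_conv_nth)
  have "\<forall>j\<le>i. p ! j \<in> W - T"
  proof (intro allI impI)
    fix j assume ji: "j \<le> i"
    then have j: "j < length p" using i by simp
    then have "p ! j \<in> set p" by simp
    moreover have "p ! j \<noteq> last p"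
    proof
      assume "p ! j = last p"
      then have "j = length p - 1" using lst ne(2) j by (simp add: nth_eq_iff_index_eq)
      then have "i = length p - 1" using ji i by simp
      then show False using i assms(4) lst by simp
    qed
    ultimately show "p ! j \<in> W - T" using ne(3) assms(2) by auto
  qed
  then show ?thesis using ewalk_reach_prefix[OF ne(4) i(1)] i(2) by simp
qed

lemma lp_reach_suf:
  assumes "lp E W q" "set q \<inter> T = {hd q}" "z \<in> set q" "z \<noteq> hd q"
  shows "reach E (W - T) z (last q)"
proof -
  have ne: "q \<noteq> []" using assms(1) lp_def by auto
  have s: "set (rev q) \<inter> T = {last (rev q)}" using assms(2) ne by (simp add: last_rev)
  have "reach E (W - T) (hd (rev q)) z"
    using lp_reach_pre[OF lp_rev[OF assms(1)] s] assms(3,4) ne by (simp add: last_rev)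
  then show ?thesis using ne by (simp add: hd_rev reach_sym)
qed

lemma closure:
  assumes "reach E W a z" "E \<subseteq> insert {x,y} E'" "Q x \<longleftrightarrow> Q y" "Q a"
    "\<And>u w. Q u \<Longrightarrow> {u,w} \<in> E' \<Longrightarrow> w \<in> W \<Longrightarrow> Q w"
  shows "Q z"
  using assms(1,4)
proof (induction rule: reach.induct)
  case (rrefl a) then show ?case by simp
next
  case (rstep a b c)
  then have Qb: "Q b" by simp
  show ?case
  proof (cases "{b,c} \<in> E'")
    case True then show ?thesis using assms(5) Qb rstep.hyps by blast
  next
    case False
    then have "{b,c} = {x,y}" using rstep.hyps(2) assms(2) by blast
    then show ?thesis using Qb assms(3) by (auto simp: doubleton_eq_iff)
  qed
qed

lemma side:
  assumes hypE: "\<forall>X\<subseteq>V. card X < k \<longrightarrow> (\<exists>a\<in>A-X. \<exists>b\<in>B-X. reach E (V-X) a b)"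
    and sep: "\<not>(\<exists>a\<in>A-S. \<exists>b\<in>B-S. reach E' (V-S) a b)"
    and EE: "E \<subseteq> insert {x,y} E'"
    and yn: "\<not>(\<exists>a\<in>A. reach E' (V-S) a y)"
  shows "\<forall>X\<subseteq>V. card X < k \<longrightarrow> (\<exists>a\<in>A-X. \<exists>t\<in>insert x S - X. reach E' (V-X) a t)"
proof (intro allI impI)
  fix X assume X: "X \<subseteq> V" "card X < k"
  then obtain a b where ab: "a \<in> A - X" "b \<in> B - X" "reach E (V-X) a b" using hypE by blast
  let ?T = "insert x S"
  have sub1: "V - X - ?T \<subseteq> V - X" by blast
  have sub2: "V - X - ?T \<subseteq> V - S" by blast
  have claim: "a' \<in> A \<longrightarrow> ((\<exists>t\<in>?T - X. reach E' (V-X) a' t) \<or> (z \<notin> ?T \<and> reach E' (V - X - ?T) a' z))"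
    if "reach E (V-X) a' z" for a' z
    using that
  proof (induction rule: reach.induct)
    case (rrefl a')
    show ?case
    proof (cases "a' \<in> ?T")
      case True
      have "reach E' (V-X) a' a'" using rrefl by (rule reach.rrefl)
      then show ?thesis using True rrefl by blast
    next
      case False
      have "reach E' (V - X - ?T) a' a'" using rrefl False by (intro reach.rrefl) simp
      then show ?thesis using False by blast
    qed
  next
    case (rstep a' b' c)
    show ?case
    proof
      assume aA: "a' \<in> A"
      show "(\<exists>t\<in>?T - X. reach E' (V-X) a' t) \<or> (c \<notin> ?T \<and> reach E' (V - X - ?T) a' c)"
      proof (cases "\<exists>t\<in>?T - X. reach E' (V-X) a' t")
        case True then show ?thesis by blast
      next
        case False
        then have b1: "b' \<notin> ?T" "reach E' (V - X - ?T) a' b'" using rstep.IH aA by auto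
        show ?thesis
        proof (cases "{b', c} \<in> E'")
          case True
          show ?thesis
          proof (cases "c \<in> ?T")
            case cT: True
            have "reach E' (V-X) a' b'" using reach_mono[OF b1(2) order_refl sub1] .
            then have "reach E' (V-X) a' c" using True rstep.hyps(3) by (rule reach.rstep)
            then show ?thesis using cT rstep.hyps(3) by blast
          next
            case False
            have "c \<in> V - X - ?T" using False rstep.hyps(3) by blast
            then have "reach E' (V - X - ?T) a' c" by (rule reach.rstep[OF b1(2) True])
            then show ?thesis using False by blast
          qed
        next
          case False
          then have "{b', c} = {x, y}" using rstep.hyps(2) EE by blast
          then have "b' = y" using b1(1) by (auto simp: doubleton_eq_iff)
          then have "reach E' (V - S) a' y" using reach_mono[OF b1(2) order_refl sub2] by simp
          then show ?thesis using yn aA by blast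
        qed
      qed
    qed
  qed
  have aA: "a \<in> A" using ab by blast
  show "\<exists>a\<in>A-X. \<exists>t\<in>insert x S - X. reach E' (V-X) a t"
  proof (cases "\<exists>t\<in>?T - X. reach E' (V-X) a t")
    case True then show ?thesis using ab by blast
  next
    case False
    then have bb: "b \<notin> ?T" "reach E' (V - X - ?T) a b" using claim[OF ab(3)] aA by auto
    then have r: "reach E' (V - S) a b" using reach_mono[OF bb(2) order_refl sub2] by simp
    have "b \<notin> S" using bb by blast
    moreover have "a \<notin> S" using reach_W[OF r] by blast
    ultimately show ?thesis using sep aA ab r by blast
  qed
qed

definition links :: "'a set set \<Rightarrow> 'a set \<Rightarrow> 'a set \<Rightarrow> 'a set \<Rightarrow> 'a list set \<Rightarrow> bool" where
  "links E W A B P \<longleftrightarrow> (\<forall>p\<in>P. lp E W p \<and> hd p \<in> A \<and> last p \<in> B) \<and>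
     (\<forall>p\<in>P. \<forall>q\<in>P. p \<noteq> q \<longrightarrow> set p \<inter> set q = {})"

lemma lp_mono: "lp E W p \<Longrightarrow> E \<subseteq> E2 \<Longrightarrow> lp E2 W p"
  unfolding lp_def using ewalk_mono by metis

lemma links_mono: "links E W A B P \<Longrightarrow> E \<subseteq> E2 \<Longrightarrow> links E2 W A B P"
  unfolding links_def using lp_mono by blast

lemma trunc_end:
  assumes "links E W A T P"
  shows "links E W A T (cutB T ` P) \<and> card (cutB T ` P) = card P \<and> (\<forall>p\<in>cutB T ` P. set p \<inter> T = {last p})"
proof -
  have ne: "\<forall>p\<in>P. set p \<inter> T \<noteq> {}"
  proof
    fix p assume "p \<in> P"
    then have "p \<noteq> []" "last p \<in> T" using assms unfolding links_def lp_def by auto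
    then show "set p \<inter> T \<noteq> {}" using last_in_set by blast
  qed
  have g: "\<forall>p\<in>P. cutB T p \<noteq> [] \<and> set (cutB T p) \<subseteq> set p"
  proof
    fix p assume "p \<in> P"
    then have "set p \<inter> T \<noteq> {}" using ne by blast
    then show "cutB T p \<noteq> [] \<and> set (cutB T p) \<subseteq> set p" using cutB_props[of p T] cutB_sub[of T p] by simp
  qed
  have dj: "\<forall>p\<in>P. \<forall>q\<in>P. p \<noteq> q \<longrightarrow> set p \<inter> set q = {}" using assms unfolding links_def by simp
  have fm: "card (cutB T ` P) = card P \<and> (\<forall>p\<in>cutB T ` P. \<forall>q\<in>cutB T ` P. p \<noteq> q \<longrightarrow> set p \<inter> set q = {})"
    by (rule fam_map[OF dj g])
  have "\<forall>p\<in>P. lp E W (cutB T p) \<and> hd (cutB T p) \<in> A \<and> last (cutB T p) \<in> T \<and> set (cutB T p) \<inter> T = {last (cutB T p)}"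
  proof
    fix p assume p: "p \<in> P"
    have "lp E W p" "hd p \<in> A" using p assms unfolding links_def by auto
    then show "lp E W (cutB T p) \<and> hd (cutB T p) \<in> A \<and> last (cutB T p) \<in> T \<and> set (cutB T p) \<inter> T = {last (cutB T p)}"
      using cutB_props[of p T] cutB_lp[of E W p T] ne p by auto
  qed
  then have pw: "\<forall>p\<in>cutB T ` P. lp E W p \<and> hd p \<in> A \<and> last p \<in> T \<and> set p \<inter> T = {last p}" by blast
  have "links E W A T (cutB T ` P)" unfolding links_def using fm pw by blast
  then show ?thesis using fm pw by blast
qed

lemma trunc_start:
  assumes "links E W T B P"
  shows "links E W T B (cutA T ` P) \<and> card (cutA T ` P) = card P \<and> (\<forall>p\<in>cutA T ` P. set p \<inter> T = {hd p})"
proof -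
  have ne: "\<forall>p\<in>P. set p \<inter> T \<noteq> {}"
  proof
    fix p assume "p \<in> P"
    then have "p \<noteq> []" "hd p \<in> T" using assms unfolding links_def lp_def by auto
    then show "set p \<inter> T \<noteq> {}" using hd_in_set by blast
  qed
  have g: "\<forall>p\<in>P. cutA T p \<noteq> [] \<and> set (cutA T p) \<subseteq> set p"
  proof
    fix p assume "p \<in> P"
    then have "set p \<inter> T \<noteq> {}" using ne by blast
    then show "cutA T p \<noteq> [] \<and> set (cutA T p) \<subseteq> set p" using cutA_props[of p T]  by simp
  qed
  have dj: "\<forall>p\<in>P. \<forall>q\<in>P. p \<noteq> q \<longrightarrow> set p \<inter> set q = {}" using assms unfolding links_def by simp
  have fm: "card (cutA T ` P) = card P \<and> (\<forall>p\<in>cutA T ` P. \<forall>q\<in>cutA T ` P. p \<noteq> q \<longrightarrow> set p \<inter> set q = {})"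
    by (rule fam_map[OF dj g])
  have "\<forall>p\<in>P. lp E W (cutA T p) \<and> hd (cutA T p) \<in> T \<and> last (cutA T p) \<in> B \<and> set (cutA T p) \<inter> T = {hd (cutA T p)}"
  proof
    fix p assume p: "p \<in> P"
    have "lp E W p" "last p \<in> B" using p assms unfolding links_def by auto
    then show "lp E W (cutA T p) \<and> hd (cutA T p) \<in> T \<and> last (cutA T p) \<in> B \<and> set (cutA T p) \<inter> T = {hd (cutA T p)}"
      using cutA_props[of p T] cutA_lp[of E W p T] ne p by auto
  qed
  then have pw: "\<forall>p\<in>cutA T ` P. lp E W p \<and> hd p \<in> T \<and> last p \<in> B \<and> set p \<inter> T = {hd p}" by blast
  have "links E W T B (cutA T ` P)" unfolding links_def using fm pw by blast
  then show ?thesis using fm pw by blast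
qed

lemma menger:
  assumes fV: "finite V"
  shows "finite E \<Longrightarrow> \<forall>e\<in>E. \<exists>x y. e = {x,y} \<Longrightarrow>
    \<forall>X\<subseteq>V. card X < k \<longrightarrow> (\<exists>a\<in>A-X. \<exists>b\<in>B-X. reach E (V-X) a b) \<Longrightarrow>
    \<exists>P. card P = k \<and> links E V A B P"
proof (induction "card E" arbitrary: E A B rule: less_induct)
  case less
  note fE = less.prems(1) and E2 = less.prems(2) and hyp = less.prems(3)
  show ?case
  proof (cases "E = {}")
    case True
    define X where "X = A \<inter> B \<inter> V"
    have XV: "X \<subseteq> V" unfolding X_def by blast
    have "\<not> card X < k"
    proof
      assume ck: "card X < k"
      obtain a b where ab: "a \<in> A-X" "b \<in> B-X" "reach E (V-X) a b" using hyp[rule_format, OF XV ck] by blast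
      have "reach {} (V-X) a b" using ab(3) True by simp
      then have "a = b" by (rule reach_empty)
      moreover have "a \<in> V" using reach_W[OF ab(3)] by blast
      ultimately show False using ab X_def by blast
    qed
    then obtain Y where Y: "Y \<subseteq> X" "card Y = k" by (meson not_less obtain_subset_with_card_n)
    define P where "P = (\<lambda>v. [v]) ` Y"
    have "card P = k" unfolding P_def using Y by (simp add: card_image inj_on_def)
    moreover have "links E V A B P" unfolding P_def links_def lp_def using Y X_def by auto
    ultimately show ?thesis by blast
  next
    case False
    then obtain e where e: "e \<in> E" by blast
    define E' where "E' = E - {e}"
    have lt: "card E' < card E" unfolding E'_def by (rule card_Diff1_less[OF fE e])
    have fE': "finite E'" using fE E'_def by simp
    have E2': "\<forall>e\<in>E'. \<exists>x y. e = {x,y}" using E2 E'_def by simp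
    have IH: "\<exists>P. card P = k \<and> links E' V A' B' P"
      if "\<forall>X\<subseteq>V. card X < k \<longrightarrow> (\<exists>a\<in>A'-X. \<exists>b\<in>B'-X. reach E' (V-X) a b)" for A' B'
      using less.hyps[OF lt fE' E2' that] .
    have EE: "E \<subseteq> insert e E'" using E'_def by blast
    have E'E: "E' \<subseteq> E" using E'_def by blast
    show ?thesis
    proof (cases "\<forall>X\<subseteq>V. card X < k \<longrightarrow> (\<exists>a\<in>A-X. \<exists>b\<in>B-X. reach E' (V-X) a b)")
      case True
      then obtain P where "card P = k" "links E' V A B P" using IH by blast
      then show ?thesis using links_mono[OF _ E'E] by blast
    next
      case False
      then obtain S where S: "S \<subseteq> V" "card S < k" "\<not>(\<exists>a\<in>A-S. \<exists>b\<in>B-S. reach E' (V-S) a b)"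
        by blast
      have fS: "finite S" using S(1) fV finite_subset by blast
      obtain x0 y0 where e0: "e = {x0,y0}" using E2 e by blast
      define RA where "RA = {z. \<exists>a\<in>A. reach E' (V-S) a z}"
      define RB where "RB = {z. \<exists>b\<in>B. reach E' (V-S) z b}"
      obtain a0 b0 where ab0: "a0 \<in> A-S" "b0 \<in> B-S" "reach E (V-S) a0 b0" using hyp[rule_format, OF S(1) S(2)] by blast
      have disj: "RA \<inter> RB = {}"
      proof -
        { fix z assume "z \<in> RA" "z \<in> RB"
          then obtain a b where ab: "a \<in> A" "b \<in> B" "reach E' (V-S) a z" "reach E' (V-S) z b"
            unfolding RA_def RB_def by blast
          have r: "reach E' (V-S) a b" by (rule reach_trans[OF ab(4) ab(3)])
          have "a \<notin> S" "b \<notin> S" using reach_W[OF r] by blast+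
          then have False using S(3) ab(1,2) r by blast
        }
        then show ?thesis by blast
      qed
      have EE0: "E \<subseteq> insert {x0,y0} E'" using EE e0 by simp
      have iffA: "x0 \<in> RA \<longleftrightarrow> y0 \<notin> RA"
      proof (rule ccontr)
        assume "\<not> (x0 \<in> RA \<longleftrightarrow> y0 \<notin> RA)"
        then have q: "x0 \<in> RA \<longleftrightarrow> y0 \<in> RA" by blast
        have a0RA: "a0 \<in> RA"
        proof -
          have "a0 \<in> V - S" using reach_W[OF ab0(3)] by blast
          then have "reach E' (V-S) a0 a0" by (rule reach.rrefl)
          then show ?thesis unfolding RA_def using ab0(1) by blast
        qed
        have cl: "w \<in> RA" if th: "u \<in> RA" "{u,w} \<in> E'" "w \<in> V - S" for u w
        proof -
          obtain a where a: "a \<in> A" "reach E' (V-S) a u" using th(1) unfolding RA_def by blast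
          have "reach E' (V-S) a w" by (rule reach.rstep[OF a(2) th(2) th(3)])
          then show ?thesis unfolding RA_def using \<open>a \<in> A\<close> by blast
        qed
        have "b0 \<in> RA" using closure[where Q="\<lambda>z. z \<in> RA", OF ab0(3) EE0 q a0RA] cl by blast
        moreover have "b0 \<in> RB"
        proof -
          have "b0 \<in> V - S" using reach_W[OF ab0(3)] by blast
          then have "reach E' (V-S) b0 b0" by (rule reach.rrefl)
          then show ?thesis unfolding RB_def using ab0(2) by blast
        qed
        ultimately show False using disj by blast
      qed
      have iffB: "x0 \<in> RB \<longleftrightarrow> y0 \<notin> RB"
      proof (rule ccontr)
        assume "\<not> (x0 \<in> RB \<longleftrightarrow> y0 \<notin> RB)"
        then have q: "x0 \<in> RB \<longleftrightarrow> y0 \<in> RB" by blast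
        have b0RB: "b0 \<in> RB"
        proof -
          have "b0 \<in> V - S" using reach_W[OF ab0(3)] by blast
          then have "reach E' (V-S) b0 b0" by (rule reach.rrefl)
          then show ?thesis unfolding RB_def using ab0(2) by blast
        qed
        have cl: "w \<in> RB" if th: "u \<in> RB" "{u,w} \<in> E'" "w \<in> V - S" for u w
        proof -
          obtain b where b: "b \<in> B" "reach E' (V-S) u b" using th(1) unfolding RB_def by blast
          have "u \<in> V - S" using reach_W[OF b(2)] by blast
          then have "reach E' (V-S) u u" by (rule reach.rrefl)
          then have "reach E' (V-S) u w" using th(2,3) by (rule reach.rstep)
          then have wu: "reach E' (V-S) w u" by (rule reach_sym)
          have "reach E' (V-S) w b" by (rule reach_trans[OF b(2) wu])
          then show ?thesis unfolding RB_def using b(1) by blast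
        qed
        have "a0 \<in> RB" using closure[where Q="\<lambda>z. z \<in> RB", OF reach_sym[OF ab0(3)] EE0 q b0RB] cl by blast
        moreover have "a0 \<in> RA"
        proof -
          have "a0 \<in> V - S" using reach_W[OF ab0(3)] by blast
          then have "reach E' (V-S) a0 a0" by (rule reach.rrefl)
          then show ?thesis unfolding RA_def using ab0(1) by blast
        qed
        ultimately show False using disj by blast
      qed
      obtain x y where xy: "e = {x,y}" "x \<in> RA" "y \<notin> RA"
      proof (cases "x0 \<in> RA")
        case True then show ?thesis using that e0 iffA by blast
      next
        case False then show ?thesis using that[of y0 x0] e0 iffA by (simp add: insert_commute)
      qed
      have xyB: "x \<in> RB \<longleftrightarrow> y \<notin> RB" using iffB xy(1) e0 by (auto simp: doubleton_eq_iff)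
      have yRB: "y \<in> RB" using xyB xy(2) disj by blast
      have xVS: "x \<in> V - S"
      proof -
        obtain a where "a \<in> A" "reach E' (V-S) a x" using xy(2) unfolding RA_def by blast
        then show ?thesis using reach_W by metis
      qed
      have yVS: "y \<in> V - S"
      proof -
        obtain b where "b \<in> B" "reach E' (V-S) y b" using yRB unfolding RB_def by blast
        then show ?thesis using reach_W by metis
      qed
      have EExy: "E \<subseteq> insert {x,y} E'" using EE xy(1) by simp
      define T1 where "T1 = insert x S"
      define T2 where "T2 = insert y S"
      have h1: "\<forall>X\<subseteq>V. card X < k \<longrightarrow> (\<exists>a\<in>A-X. \<exists>t\<in>T1-X. reach E' (V-X) a t)"
        unfolding T1_def
        by (rule side[OF hyp S(3) EExy]) (use xy(3) in \<open>simp add: RA_def\<close>)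
      have h2: "\<forall>X\<subseteq>V. card X < k \<longrightarrow> (\<exists>t\<in>T2-X. \<exists>b\<in>B-X. reach E' (V-X) t b)"
      proof -
        have hE': "\<forall>X\<subseteq>V. card X < k \<longrightarrow> (\<exists>a\<in>B-X. \<exists>b\<in>A-X. reach E (V-X) a b)"
        proof (intro allI impI)
          fix X assume "X \<subseteq> V" "card X < k"
          then obtain a b where ab: "a \<in> A-X" "b \<in> B-X" "reach E (V-X) a b" using hyp by blast
          have "reach E (V-X) b a" using ab(3) by (rule reach_sym)
          then show "\<exists>a\<in>B-X. \<exists>b\<in>A-X. reach E (V-X) a b" using ab(1,2) by blast
        qed
        have sep': "\<not>(\<exists>a\<in>B-S. \<exists>b\<in>A-S. reach E' (V-S) a b)"
        proof
          assume "\<exists>a\<in>B-S. \<exists>b\<in>A-S. reach E' (V-S) a b"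
          then obtain a b where ab: "a \<in> B-S" "b \<in> A-S" "reach E' (V-S) a b" by blast
          have "reach E' (V-S) b a" using ab(3) by (rule reach_sym)
          then show False using S(3) ab(1,2) by blast
        qed
        have EEyx: "E \<subseteq> insert {y,x} E'" using EExy by (simp add: insert_commute)
        have xn: "\<not>(\<exists>b\<in>B. reach E' (V-S) b x)"
        proof
          assume "\<exists>b\<in>B. reach E' (V-S) b x"
          then obtain b where b: "b \<in> B" "reach E' (V-S) b x" by blast
          have "reach E' (V-S) x b" using b(2) by (rule reach_sym)
          then have "x \<in> RB" unfolding RB_def using b(1) by blast
          then show False using xy(2) disj by blast
        qed
        have s: "\<forall>X\<subseteq>V. card X < k \<longrightarrow> (\<exists>a\<in>B-X. \<exists>t\<in>insert y S - X. reach E' (V-X) a t)"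
          by (rule side[OF hE' sep' EEyx xn])
        show ?thesis unfolding T2_def
        proof (intro allI impI)
          fix X assume "X \<subseteq> V" "card X < k"
          then obtain a t where at: "a \<in> B-X" "t \<in> insert y S - X" "reach E' (V-X) a t" using s by blast
          have "reach E' (V-X) t a" using at(3) by (rule reach_sym)
          then show "\<exists>t\<in>insert y S-X. \<exists>b\<in>B-X. reach E' (V-X) t b" using at(1,2) by blast
        qed
      qed
      obtain P1 where P1: "card P1 = k" "links E' V A T1 P1" using IH[OF h1] by blast
      obtain P2 where P2: "card P2 = k" "links E' V T2 B P2" using IH[OF h2] by blast
      define Q1 where "Q1 = cutB T1 ` P1"
      define Q2 where "Q2 = cutA T2 ` P2"
      have Q1: "links E' V A T1 Q1" "card Q1 = k" "\<forall>p\<in>Q1. set p \<inter> T1 = {last p}"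
        using trunc_end[OF P1(2)] P1(1) unfolding Q1_def by auto
      have Q2: "links E' V T2 B Q2" "card Q2 = k" "\<forall>p\<in>Q2. set p \<inter> T2 = {hd p}"
        using trunc_start[OF P2(2)] P2(1) unfolding Q2_def by auto
      have fT1: "finite T1" "finite T2" using fS unfolding T1_def T2_def by auto
      have xS: "x \<notin> S" "y \<notin> S" using xVS yVS by auto
      have cT1le: "card T1 \<le> k" using fS S(2) xS unfolding T1_def by simp
      have cT2le: "card T2 \<le> k" using fS S(2) xS unfolding T2_def by simp
      have Q1d: "\<forall>p\<in>Q1. \<forall>q\<in>Q1. p \<noteq> q \<longrightarrow> set p \<inter> set q = {}" using Q1(1) unfolding links_def by blast
      have Q1p: "\<forall>p\<in>Q1. lp E' V p \<and> hd p \<in> A \<and> last p \<in> T1" using Q1(1) unfolding links_def by blast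
      have Q2d: "\<forall>p\<in>Q2. \<forall>q\<in>Q2. p \<noteq> q \<longrightarrow> set p \<inter> set q = {}" using Q2(1) unfolding links_def by blast
      have Q2p: "\<forall>p\<in>Q2. lp E' V p \<and> hd p \<in> T2 \<and> last p \<in> B" using Q2(1) unfolding links_def by blast
      have injl: "inj_on last Q1"
      proof (rule inj_onI)
        fix p q assume pq: "p \<in> Q1" "q \<in> Q1" "last p = last q"
        show "p = q"
        proof (rule ccontr)
          assume "p \<noteq> q"
          then have d: "set p \<inter> set q = {}" using Q1d pq(1,2) by blast
          have "p \<noteq> []" "q \<noteq> []" using Q1p pq(1,2) unfolding lp_def by auto
          then have "last p \<in> set p" "last q \<in> set q" by auto
          then show False using d pq(3) by auto
        qed
      qed
      have injh: "inj_on hd Q2"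
      proof (rule inj_onI)
        fix p q assume pq: "p \<in> Q2" "q \<in> Q2" "hd p = hd q"
        show "p = q"
        proof (rule ccontr)
          assume "p \<noteq> q"
          then have d: "set p \<inter> set q = {}" using Q2d pq(1,2) by blast
          have "p \<noteq> []" "q \<noteq> []" using Q2p pq(1,2) unfolding lp_def by auto
          then have "hd p \<in> set p" "hd q \<in> set q" by auto
          then show False using d pq(3) by auto
        qed
      qed
      have cT1: "card T1 = k" and imQ1: "last ` Q1 = T1"
      proof -
        have sub: "last ` Q1 \<subseteq> T1" using Q1p by blast
        have c: "card (last ` Q1) = k" using card_image[OF injl] Q1(2) by simp
        then have "card (last ` Q1) = card T1" using card_mono[OF fT1(1) sub] cT1le by simp
        then show "last ` Q1 = T1" using card_subset_eq[OF fT1(1) sub] by simp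
        then show "card T1 = k" using c by simp
      qed
      have imQ2: "hd ` Q2 = T2"
      proof -
        have sub: "hd ` Q2 \<subseteq> T2" using Q2p by blast
        have c: "card (hd ` Q2) = k" using card_image[OF injh] Q2(2) by simp
        then have "card (hd ` Q2) = card T2" using card_mono[OF fT1(2) sub] cT2le by simp
        then show "hd ` Q2 = T2" using card_subset_eq[OF fT1(2) sub] by simp
      qed
      define p1 where "p1 = (\<lambda>t. inv_into Q1 last t)"
      define p2 where "p2 = (\<lambda>t. inv_into Q2 hd t)"
      have p1: "p1 t \<in> Q1 \<and> last (p1 t) = t" if "t \<in> T1" for t
      proof -
        have "t \<in> last ` Q1" using that imQ1 by simp
        then show ?thesis unfolding p1_def using inv_into_into[of t last Q1] f_inv_into_f[of t last Q1] by simp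
      qed
      have p2: "p2 t \<in> Q2 \<and> hd (p2 t) = t" if "t \<in> T2" for t
      proof -
        have "t \<in> hd ` Q2" using that imQ2 by simp
        then show ?thesis unfolding p2_def using inv_into_into[of t hd Q2] f_inv_into_f[of t hd Q2] by simp
      qed
      have lp1: "lp E' V (p1 t) \<and> hd (p1 t) \<in> A \<and> last (p1 t) = t \<and> set (p1 t) \<inter> T1 = {t}" if "t \<in> T1" for t
      proof -
        have a: "p1 t \<in> Q1" "last (p1 t) = t" using p1[OF that] by auto
        then show ?thesis using Q1p Q1(3) by auto
      qed
      have lp2: "lp E' V (p2 t) \<and> hd (p2 t) = t \<and> last (p2 t) \<in> B \<and> set (p2 t) \<inter> T2 = {t}" if "t \<in> T2" for t
      proof -
        have a: "p2 t \<in> Q2" "hd (p2 t) = t" using p2[OF that] by auto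
        then show ?thesis using Q2p Q2(3) by auto
      qed
      have subT1: "V - T1 \<subseteq> V - S" unfolding T1_def by blast
      have subT2: "V - T2 \<subseteq> V - S" unfolding T2_def by blast
      have key: "z \<in> S" if th: "t \<in> T1" "t' \<in> T2" "z \<in> set (p1 t)" "z \<in> set (p2 t')" for t t' z
      proof (rule ccontr)
        assume zS: "z \<notin> S"
        have "z \<in> RA"
        proof (cases "z = t")
          case True
          then have "z = x" using th(1) zS unfolding T1_def by blast
          then show ?thesis using xy(2) by simp
        next
          case False
          have l: "lp E' V (p1 t)" "set (p1 t) \<inter> T1 = {last (p1 t)}" "z \<noteq> last (p1 t)"
            using lp1[OF th(1)] False by auto
          have r: "reach E' (V - T1) (hd (p1 t)) z" by (rule lp_reach_pre[OF l(1) l(2) th(3) l(3)])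
          have "reach E' (V - S) (hd (p1 t)) z" by (rule reach_mono[OF r order_refl subT1])
          then show ?thesis unfolding RA_def using lp1[OF th(1)] by blast
        qed
        moreover have "z \<in> RB"
        proof (cases "z = t'")
          case True
          then have "z = y" using th(2) zS unfolding T2_def by blast
          then show ?thesis using yRB by simp
        next
          case False
          have l: "lp E' V (p2 t')" "set (p2 t') \<inter> T2 = {hd (p2 t')}" "z \<noteq> hd (p2 t')"
            using lp2[OF th(2)] False by auto
          have r: "reach E' (V - T2) z (last (p2 t'))" by (rule lp_reach_suf[OF l(1) l(2) th(4) l(3)])
          have "reach E' (V - S) z (last (p2 t'))" by (rule reach_mono[OF r order_refl subT2])
          then show ?thesis unfolding RB_def using lp2[OF th(2)] by blast
        qed
        ultimately show False using disj by blast
      qed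
      define sg where "sg = (\<lambda>t. if t = x then y else t)"
      have sgT: "sg t \<in> T2" if "t \<in> T1" for t using that unfolding sg_def T1_def T2_def by auto
      define f where "f = (\<lambda>t. if t = x then p1 x @ p2 y else p1 t @ tl (p2 t))"
      have fset: "set (f t) \<subseteq> set (p1 t) \<union> set (p2 (sg t))" for t
        unfolding f_def sg_def using set_tl_sub[of "p2 t"] by auto
      have cross: "z \<in> S \<and> z = t \<and> z = sg t'"
        if th: "t \<in> T1" "t' \<in> T1" "z \<in> set (p1 t)" "z \<in> set (p2 (sg t'))" for t t' z
      proof -
        have zS: "z \<in> S" using key[OF th(1) sgT[OF th(2)] th(3,4)] .
        have "z = t" using lp1[OF th(1)] th(3) zS unfolding T1_def by blast
        moreover have "z = sg t'" using lp2[OF sgT[OF th(2)]] th(4) zS unfolding T2_def by blast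
        ultimately show ?thesis using zS by blast
      qed
      have xT1: "x \<in> T1" unfolding T1_def by simp
      have yT2: "y \<in> T2" unfolding T2_def by simp
      have fprops: "lp E V (f t) \<and> hd (f t) \<in> A \<and> last (f t) \<in> B" if tT: "t \<in> T1" for t
      proof (cases "t = x")
        case True
        have a: "lp E' V (p1 x)" "hd (p1 x) \<in> A" "last (p1 x) = x" using lp1[OF xT1] by auto
        have b: "lp E' V (p2 y)" "last (p2 y) \<in> B" "hd (p2 y) = y" using lp2[OF yT2] by auto
        have dis: "set (p1 x) \<inter> set (p2 y) = {}"
        proof -
          { fix z assume z: "z \<in> set (p1 x)" "z \<in> set (p2 y)"
            then have "z \<in> set (p2 (sg x))" unfolding sg_def by simp
            then have "z \<in> S \<and> z = x" using cross[OF xT1 xT1 z(1)] by blast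
            then have False using xS by blast }
          then show ?thesis by blast
        qed
        have w1: "ewalk E (p1 x)" "p1 x \<noteq> []" using a(1) ewalk_mono[OF _ E'E] unfolding lp_def by auto
        have w2: "ewalk E (p2 y)" "p2 y \<noteq> []" using b(1) ewalk_mono[OF _ E'E] unfolding lp_def by auto
        have ed: "{last (p1 x), hd (p2 y)} \<in> E" using a(3) b(3) e xy(1) by simp
        have ew: "ewalk E (p1 x @ p2 y)" by (rule ewalk_append2[OF w1(1) w2(1) w1(2) w2(2) ed])
        show ?thesis using a b dis ew True w1(2) w2(2) unfolding f_def lp_def by auto
      next
        case False
        have tS: "t \<in> S" using tT False unfolding T1_def by blast
        then have tT2: "t \<in> T2" unfolding T2_def by blast
        have a: "lp E' V (p1 t)" "hd (p1 t) \<in> A" "last (p1 t) = t" using lp1[OF tT] by auto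
        have b: "lp E' V (p2 t)" "last (p2 t) \<in> B" "hd (p2 t) = t" using lp2[OF tT2] by auto
        have e1: "p1 t = butlast (p1 t) @ [t]" using a(1,3) unfolding lp_def by (metis append_butlast_last_id)
        have e2: "p2 t = t # tl (p2 t)" using b(1,3) unfolding lp_def by (metis list.collapse)
        have dp2: "distinct (p2 t)" using b(1) unfolding lp_def by blast
        have dis: "set (p1 t) \<inter> set (tl (p2 t)) = {}"
        proof -
          { fix z assume z1: "z \<in> set (p1 t)" and z2: "z \<in> set (tl (p2 t))"
            have "z \<in> set (p2 t)" using z2 set_tl_sub[of "p2 t"] by blast
            then have "z \<in> set (p2 (sg t))" unfolding sg_def using False by simp
            then have "z = t" using cross[OF tT tT z1] by blast
            then have False using z2 dp2 e2 by (metis distinct.simps(2))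
          }
          then show ?thesis by blast
        qed
        have ew: "ewalk E (p1 t @ tl (p2 t))"
        proof -
          have "ewalk E' (butlast (p1 t) @ [t])" using e1 a(1) unfolding lp_def by simp
          then have w1: "ewalk E (butlast (p1 t) @ [t])" using ewalk_mono[OF _ E'E] by blast
          have "ewalk E' (t # tl (p2 t))" using e2 b(1) unfolding lp_def by simp
          then have w2: "ewalk E (t # tl (p2 t))" using ewalk_mono[OF _ E'E] by blast
          have "ewalk E (butlast (p1 t) @ t # tl (p2 t))" by (rule ewalk_app[OF w1 w2])
          then show ?thesis using e1 by (metis append.assoc append_Cons append_Nil)
        qed
        have lst: "last (p1 t @ tl (p2 t)) = last (p2 t)"
        proof (cases "tl (p2 t) = []")
          case True
          then show ?thesis using a(3) e2 by (metis append_Nil2 last_ConsL)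
        next
          case False
          then show ?thesis using e2 by (metis last_ConsR last_appendR)
        qed
        have p1ne: "p1 t \<noteq> []" using a(1) unfolding lp_def by blast
        have "set (tl (p2 t)) \<subseteq> V" using b(1) set_tl_sub[of "p2 t"] unfolding lp_def by blast
        moreover have "distinct (tl (p2 t))" using dp2 by (simp add: distinct_tl)
        ultimately show ?thesis using a b dis ew lst False p1ne unfolding f_def lp_def by auto
      qed
      have fdis: "set (f t) \<inter> set (f t') = {}" if th: "t \<in> T1" "t' \<in> T1" "t \<noteq> t'" for t t'
      proof -
        have n1: "p1 t \<noteq> p1 t'" using p1[OF th(1)] p1[OF th(2)] th(3) by metis
        have d1: "set (p1 t) \<inter> set (p1 t') = {}" using Q1d p1[OF th(1)] p1[OF th(2)] n1 by blast
        have sgne: "sg t \<noteq> sg t'" using th xS unfolding sg_def T1_def by auto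
        have n2: "p2 (sg t) \<noteq> p2 (sg t')" using p2[OF sgT[OF th(1)]] p2[OF sgT[OF th(2)]] sgne by metis
        have d2: "set (p2 (sg t)) \<inter> set (p2 (sg t')) = {}"
          using Q2d p2[OF sgT[OF th(1)]] p2[OF sgT[OF th(2)]] n2 by blast
        have d3: "set (p1 a) \<inter> set (p2 (sg b)) = {}" if ab: "a \<in> T1" "b \<in> T1" "a \<noteq> b" for a b
        proof -
          { fix z assume z: "z \<in> set (p1 a)" "z \<in> set (p2 (sg b))"
            then have c: "z \<in> S \<and> z = a \<and> z = sg b" using cross[OF ab(1) ab(2) z] by blast
            then have False using ab(3) xS unfolding sg_def by (auto split: if_splits) }
          then show ?thesis by blast
        qed
        show ?thesis using fset[of t] fset[of t'] d1 d2 d3[OF th] d3[OF th(2) th(1)] th(3) by blast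
      qed
      have injf: "inj_on f T1"
      proof (rule inj_onI)
        fix t t' assume tt: "t \<in> T1" "t' \<in> T1" "f t = f t'"
        show "t = t'"
        proof (rule ccontr)
          assume "t \<noteq> t'"
          then have "set (f t) \<inter> set (f t') = {}" using fdis tt(1,2) by blast
          moreover have "f t \<noteq> []" using fprops[OF tt(1)] unfolding lp_def by blast
          ultimately show False using tt(3) by simp
        qed
      qed
      have "card (f ` T1) = k" using card_image[OF injf] cT1 by simp
      moreover have "links E V A B (f ` T1)"
        unfolding links_def
      proof (rule conjI)
        show "\<forall>p\<in>f ` T1. lp E V p \<and> hd p \<in> A \<and> last p \<in> B" using fprops by blast
        show "\<forall>p\<in>f ` T1. \<forall>q\<in>f ` T1. p \<noteq> q \<longrightarrow> set p \<inter> set q = {}"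
        proof (intro ballI impI)
          fix p q assume "p \<in> f ` T1" "q \<in> f ` T1" "p \<noteq> q"
          then obtain t t' where "t \<in> T1" "t' \<in> T1" "p = f t" "q = f t'" "t \<noteq> t'" by blast
          then show "set p \<inter> set q = {}" using fdis by blast
        qed
      qed
      ultimately show ?thesis by blast
    qed
  qed
qed

lemma is_path_lp: "is_path V E xs u v \<longleftrightarrow> lp E V xs \<and> hd xs = u \<and> last xs = v"
  unfolding is_path_def lp_def ewalk_nth by auto

lemma seg_reach:
  assumes ed: "\<forall>l. Suc l < length xs \<longrightarrow> {xs!l, xs!Suc l} \<in> F"
    and FF: "\<forall>a b. {a,b} \<in> F \<longrightarrow> a \<in> W \<longrightarrow> b \<in> W \<longrightarrow> {a,b} \<in> F'"
  shows "j < length xs \<Longrightarrow> i \<le> j \<Longrightarrow> \<forall>l. i \<le> l \<and> l \<le> j \<longrightarrow> xs!l \<in> W \<Longrightarrow> reach F' W (xs!i) (xs!j)"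
proof (induction j)
  case 0
  then have "i = 0" by simp
  then show ?case using 0 reach.rrefl by simp
next
  case (Suc j)
  show ?case
  proof (cases "i = Suc j")
    case True
    then have "xs ! Suc j \<in> W" using Suc.prems by auto
    then show ?thesis using True by (simp add: reach.rrefl)
  next
    case False
    then have ij: "i \<le> j" using Suc.prems(2) by simp
    have r: "reach F' W (xs!i) (xs!j)" using Suc.IH Suc.prems ij by simp
    have "{xs!j, xs!Suc j} \<in> F" using ed Suc.prems(1) by blast
    moreover have "xs!j \<in> W" "xs!Suc j \<in> W" using Suc.prems ij by auto
    ultimately have e: "{xs!j, xs!Suc j} \<in> F'" using FF by blast
    show ?thesis by (rule reach.rstep[OF r e \<open>xs!Suc j \<in> W\<close>])
  qed
qed

lemma path_facts:
  assumes "is_path W FX xs p q" "FX \<subseteq> F" "p \<noteq> q"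
  shows "\<forall>l. Suc l < length xs \<longrightarrow> {xs!l, xs!Suc l} \<in> F"
    "length xs \<ge> 2" "xs!0 = p" "xs!(length xs - 1) = q" "distinct xs" "set xs \<subseteq> W"
proof -
  have a: "xs \<noteq> []" "hd xs = p" "last xs = q" "distinct xs" "set xs \<subseteq> W"
      "\<forall>i. Suc i < length xs \<longrightarrow> {xs ! i, xs ! Suc i} \<in> FX"
    using assms(1) unfolding is_path_def by auto
  show "\<forall>l. Suc l < length xs \<longrightarrow> {xs!l, xs!Suc l} \<in> F" using a(6) assms(2) by blast
  show "xs!0 = p" using a(1,2) by (simp add: hd_conv_nth)
  show "xs!(length xs - 1) = q" using a(1,3) by (simp add: last_conv_nth)
  show "distinct xs" "set xs \<subseteq> W" using a by auto
  show "length xs \<ge> 2"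
  proof (rule ccontr)
    assume "\<not> length xs \<ge> 2"
    moreover have "length xs > 0" using a(1) by simp
    ultimately have "length xs = 1" by linarith
    then have "hd xs = last xs" using a(1) by (cases xs) auto
    then show False using a(2,3) assms(3) by simp
  qed
qed

lemma nth_ne:
  assumes "distinct xs" "i < length xs" "j < length xs" "i \<noteq> j"
  shows "xs!i \<noteq> xs!j"
  using assms by (simp add: nth_eq_iff_index_eq)


lemma edge0: "\<forall>l. Suc l < length xs \<longrightarrow> {xs!l, xs!Suc l} \<in> F \<Longrightarrow> length xs \<ge> 2 \<Longrightarrow> {xs!0, xs!1} \<in> F"
proof -
  assume a: "\<forall>l. Suc l < length xs \<longrightarrow> {xs!l, xs!Suc l} \<in> F" "length xs \<ge> 2"
  then have "Suc 0 < length xs" by simp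
  then show ?thesis using a(1) by (metis One_nat_def)
qed

lemma kconn_hyp:
  assumes fV: "finite V" and kc: "k_connected V F k" and k2: "2 \<le> k"
    and uv: "u \<in> V" "v \<in> V" "u \<noteq> v"
    and V'_def: "V' = V - {u,v}" and F'_def: "F' = {e\<in>F. u \<notin> e \<and> v \<notin> e}"
    and A_def: "A = {w\<in>V'. {u,w} \<in> F}" and B_def: "B = {w\<in>V'. {v,w} \<in> F}"
    and k'_def: "k' = (if {u,v} \<in> F then k - 1 else k)"
  shows "\<forall>X\<subseteq>V'. card X < k' \<longrightarrow> (\<exists>a\<in>A-X. \<exists>b\<in>B-X. reach F' (V'-X) a b)"
proof (intro allI impI)
  fix X assume X: "X \<subseteq> V'" "card X < k'"
  have XV: "X \<subseteq> V" using X(1) V'_def by blast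
  have fX: "finite X" using XV fV finite_subset by blast
  have kcS: "\<And>S. S \<subseteq> V \<Longrightarrow> card S \<le> k - 1 \<Longrightarrow> connected_graph (V - S) {e\<in>F. e \<inter> S = {}}"
    using kc unfolding k_connected_def by blast
  have cV: "card V \<ge> k + 1" using kc unfolding k_connected_def by blast
  have FF: "\<forall>a b. {a,b} \<in> F \<longrightarrow> a \<in> V'-X \<longrightarrow> b \<in> V'-X \<longrightarrow> {a,b} \<in> F'"
    unfolding F'_def V'_def by blast
  have uvX: "u \<notin> X" "v \<notin> X" using X(1) V'_def by auto
  show "\<exists>a\<in>A-X. \<exists>b\<in>B-X. reach F' (V'-X) a b"
  proof (cases "{u,v} \<in> F")
    case False
    then have ck: "card X \<le> k - 1" using X(2) k'_def by simp
    have "connected_graph (V - X) {e\<in>F. e \<inter> X = {}}" by (rule kcS[OF XV ck])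
    then obtain xs where xs: "is_path (V - X) {e\<in>F. e \<inter> X = {}} xs u v"
      using uv uvX unfolding connected_graph_def by blast
    have sub: "{e\<in>F. e \<inter> X = {}} \<subseteq> F" by blast
    note pf = path_facts[OF xs sub uv(3)]
    define n where "n = length xs"
    have n2: "n \<ge> 2" using pf(2) n_def by simp
    have n3: "n \<ge> 3"
    proof (rule ccontr)
      assume "\<not> n \<ge> 3"
      then have "n = 2" using n2 by simp
      then have "{xs!0, xs!1} \<in> F" using edge0[OF pf(1) pf(2)] by simp
      moreover have "xs!1 = v" using pf(4) \<open>n = 2\<close> n_def by simp
      ultimately show False using pf(3) False by simp
    qed
    have mid: "xs!l \<in> V' - X" if "1 \<le> l" "l \<le> n - 2" for l
    proof -
      have l: "l < n" using that n3 by simp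
      have "xs!l \<noteq> xs!0" using nth_ne[OF pf(5), of l 0] l that(1) n_def by fastforce
      moreover have "xs!l \<noteq> xs!(n-1)" using nth_ne[OF pf(5), of l "n-1"] l that(2) n3 n_def by simp
      moreover have "xs!l \<in> V - X" using pf(6) l n_def nth_mem by blast
      ultimately show ?thesis using pf(3,4) n_def V'_def by auto
    qed
    have a: "xs!1 \<in> A - X"
    proof -
      have "{xs!0, xs!1} \<in> F" using edge0[OF pf(1) pf(2)] by simp
      then show ?thesis using mid[of 1] n3 pf(3) A_def by simp
    qed
    have b: "xs!(n-2) \<in> B - X"
    proof -
      have "Suc (n-2) = n - 1" "Suc (n-2) < length xs" using n3 n_def by auto
      then have "{xs!(n-2), xs!(n-1)} \<in> F" using pf(1) by metis
      then have "{v, xs!(n-2)} \<in> F" using pf(4) n_def by (simp add: insert_commute)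
      then show ?thesis using mid[of "n-2"] n3 B_def by simp
    qed
    have "reach F' (V'-X) (xs!1) (xs!(n-2))"
      by (rule seg_reach[OF pf(1) FF]) (use n3 n_def mid in auto)
    then show ?thesis using a b by blast
  next
    case True
    then have ck: "card X < k - 1" using X(2) k'_def by simp
    have "card (X \<union> {u,v}) \<le> card X + 2"
      using fX by (simp add: card_insert_if split: if_splits)
    then have "card (X \<union> {u,v}) < card V" using ck cV by linarith
    then have "\<not> V \<subseteq> X \<union> {u,v}" using fX card_mono[of "X \<union> {u,v}" V] by (metis finite.emptyI finite.insertI finite_UnI not_le)
    then obtain w where w: "w \<in> V" "w \<notin> X" "w \<noteq> u" "w \<noteq> v" by blast
    have S1: "insert v X \<subseteq> V" "card (insert v X) \<le> k - 1"
      using XV uv fX ck card_insert_le[of X v] by (auto simp: card_insert_if)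
    have S2: "insert u X \<subseteq> V" "card (insert u X) \<le> k - 1"
      using XV uv fX ck card_insert_le[of X u] by (auto simp: card_insert_if)
    have "connected_graph (V - insert v X) {e\<in>F. e \<inter> insert v X = {}}" by (rule kcS[OF S1])
    then obtain xs where xs: "is_path (V - insert v X) {e\<in>F. e \<inter> insert v X = {}} xs u w"
      using uv uvX w unfolding connected_graph_def by blast
    have "connected_graph (V - insert u X) {e\<in>F. e \<inter> insert u X = {}}" by (rule kcS[OF S2])
    then obtain ys where ys: "is_path (V - insert u X) {e\<in>F. e \<inter> insert u X = {}} ys w v"
      using uv uvX w unfolding connected_graph_def by blast
    have sub1: "{e\<in>F. e \<inter> insert v X = {}} \<subseteq> F" by blast
    have sub2: "{e\<in>F. e \<inter> insert u X = {}} \<subseteq> F" by blast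
    note px = path_facts[OF xs sub1 w(3)[symmetric]]
    note py = path_facts[OF ys sub2 w(4)]
    define n where "n = length xs"
    define m where "m = length ys"
    have midx: "xs!l \<in> V' - X" if "1 \<le> l" "l \<le> n - 1" for l
    proof -
      have l: "l < n" using that px(2) n_def by simp
      have "xs!l \<noteq> xs!0" using nth_ne[OF px(5), of l 0] l that(1) n_def by fastforce
      moreover have "xs!l \<in> V - insert v X" using px(6) l n_def nth_mem by blast
      ultimately show ?thesis using px(3) V'_def by auto
    qed
    have midy: "ys!l \<in> V' - X" if "l \<le> m - 2" for l
    proof -
      have l: "l < m" using that py(2) m_def by simp
      have "ys!l \<noteq> ys!(m-1)" using nth_ne[OF py(5), of l "m-1"] l that py(2) m_def by simp
      moreover have "ys!l \<in> V - insert u X" using py(6) l m_def nth_mem by blast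
      ultimately show ?thesis using py(4) V'_def m_def by auto
    qed
    have a: "xs!1 \<in> A - X"
    proof -
      have "{xs!0, xs!1} \<in> F" using edge0[OF px(1) px(2)] by simp
      then show ?thesis using midx[of 1] px(2) px(3) A_def n_def by simp
    qed
    have b: "ys!(m-2) \<in> B - X"
    proof -
      have "Suc (m-2) = m - 1" "Suc (m-2) < length ys" using py(2) m_def by auto
      then have "{ys!(m-2), ys!(m-1)} \<in> F" using py(1) by metis
      then have "{v, ys!(m-2)} \<in> F" using py(4) m_def by (simp add: insert_commute)
      then show ?thesis using midy[of "m-2"] B_def by simp
    qed
    have r1: "reach F' (V'-X) (xs!1) (xs!(n-1))"
      by (rule seg_reach[OF px(1) FF]) (use px(2) n_def midx in auto)
    have r2: "reach F' (V'-X) (ys!0) (ys!(m-2))"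
      by (rule seg_reach[OF py(1) FF]) (use py(2) m_def midy in auto)
    have "xs!(n-1) = ys!0" using px(4) py(3) n_def by simp
    then have "reach F' (V'-X) (xs!1) (ys!(m-2))" using r1 r2 reach_trans by metis
    then show ?thesis using a b by blast
  qed
qed


lemma kconn_paths:
  assumes fV: "finite V" and sgr: "simple_graph V F" and kc: "k_connected V F k" and k2: "2 \<le> k"
    and uv: "u \<in> V" "v \<in> V" "u \<noteq> v"
  shows "\<exists>P. card P = k \<and> (\<forall>xs\<in>P. is_path V F xs u v) \<and>
           (\<forall>xs\<in>P. \<forall>ys\<in>P. xs \<noteq> ys \<longrightarrow> interior xs \<inter> interior ys = {})"
proof -
  define V' where "V' = V - {u,v}"
  define F' where "F' = {e\<in>F. u \<notin> e \<and> v \<notin> e}"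
  define A where "A = {w\<in>V'. {u,w} \<in> F}"
  define B where "B = {w\<in>V'. {v,w} \<in> F}"
  define k' where "k' = (if {u,v} \<in> F then k - 1 else k)"
  have hyp: "\<forall>X\<subseteq>V'. card X < k' \<longrightarrow> (\<exists>a\<in>A-X. \<exists>b\<in>B-X. reach F' (V'-X) a b)"
    by (rule kconn_hyp[OF fV kc k2 uv V'_def F'_def A_def B_def k'_def])
  have FP: "F \<subseteq> Pow V"
  proof
    fix e assume "e \<in> F"
    then obtain x y where "x \<in> V" "y \<in> V" "e = {x,y}" using sgr unfolding simple_graph_def by blast
    then show "e \<in> Pow V" by simp
  qed
  have fF: "finite F" using finite_subset[OF FP] fV by simp
  have fF': "finite F'" using fF F'_def by simp
  have F'2: "\<forall>e\<in>F'. \<exists>x y. e = {x,y}" using sgr unfolding simple_graph_def F'_def by blast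
  have fV': "finite V'" using fV V'_def by simp
  obtain Q where Q: "card Q = k'" "links F' V' A B Q"
    using menger[OF fV' fF' F'2 hyp] by blast
  have Qp: "\<forall>q\<in>Q. lp F' V' q \<and> hd q \<in> A \<and> last q \<in> B" using Q(2) unfolding links_def by blast
  have Qd: "\<forall>q\<in>Q. \<forall>q'\<in>Q. q \<noteq> q' \<longrightarrow> set q \<inter> set q' = {}" using Q(2) unfolding links_def by blast
  define g where "g = (\<lambda>q. u # q @ [v])"
  have F'F: "F' \<subseteq> F" unfolding F'_def by blast
  have gpath: "is_path V F (g q) u v" if q: "q \<in> Q" for q
  proof -
    have l: "q \<noteq> []" "distinct q" "set q \<subseteq> V'" "ewalk F' q" "hd q \<in> A" "last q \<in> B"
      using Qp q unfolding lp_def by auto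
    have w: "ewalk F q" using ewalk_mono[OF l(4) F'F] .
    have e1: "{last q, v} \<in> F" using l(6) B_def by (simp add: insert_commute)
    have w2: "ewalk F (q @ [v])" by (rule ewalk_append2[OF w _ l(1) _]) (use e1 in simp_all)
    have e2: "{last [u], hd (q @ [v])} \<in> F" using l(1,5) A_def by simp
    have w3: "ewalk F ([u] @ (q @ [v]))" by (rule ewalk_append2[OF _ w2 _ _ e2]) simp_all
    have "u \<notin> set q" "v \<notin> set q" using l(3) V'_def by auto
    moreover have "set q \<subseteq> V" using l(3) V'_def by auto
    ultimately show ?thesis unfolding is_path_lp lp_def g_def using w3 l(2) uv by simp
  qed
  have gint: "interior (g q) = set q" for q unfolding interior_def g_def by simp
  have ginj: "inj_on g Q" unfolding g_def by (rule inj_onI) simp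
  have cg: "card (g ` Q) = k'" using card_image[OF ginj] Q(1) by simp
  have gdis: "\<forall>xs\<in>g ` Q. \<forall>ys\<in>g ` Q. xs \<noteq> ys \<longrightarrow> interior xs \<inter> interior ys = {}"
  proof (intro ballI impI)
    fix xs ys assume "xs \<in> g ` Q" "ys \<in> g ` Q" "xs \<noteq> ys"
    then obtain q q' where "q \<in> Q" "q' \<in> Q" "xs = g q" "ys = g q'" "q \<noteq> q'" by blast
    then show "interior xs \<inter> interior ys = {}" using Qd gint by simp
  qed
  show ?thesis
  proof (cases "{u,v} \<in> F")
    case False
    then have "card (g ` Q) = k" using cg k'_def by simp
    then show ?thesis using gpath gdis by blast
  next
    case True
    then have k'1: "k' = k - 1" "k' \<ge> 1" using k'_def k2 by auto
    then have fQ: "finite Q" using Q(1) card_ge_0_finite by (metis not_one_le_zero card.infinite)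
    have nin: "[u,v] \<notin> g ` Q"
    proof
      assume "[u,v] \<in> g ` Q"
      then obtain q where "q \<in> Q" "[u,v] = u # q @ [v]" unfolding g_def by blast
      moreover have "q \<noteq> []" using Qp \<open>q \<in> Q\<close> unfolding lp_def by blast
      ultimately show False by (cases q) auto
    qed
    define P where "P = insert [u,v] (g ` Q)"
    have "card P = k" unfolding P_def using fQ nin cg k'1 by simp
    moreover have "\<forall>xs\<in>P. is_path V F xs u v"
    proof
      fix xs assume "xs \<in> P"
      moreover have "is_path V F [u,v] u v" unfolding is_path_def using True uv by (auto simp: less_Suc_eq)
      ultimately show "is_path V F xs u v" unfolding P_def using gpath by blast
    qed
    moreover have "\<forall>xs\<in>P. \<forall>ys\<in>P. xs \<noteq> ys \<longrightarrow> interior xs \<inter> interior ys = {}"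
    proof -
      have "interior [u,v] = {}" unfolding interior_def by simp
      then show ?thesis unfolding P_def using gdis by blast
    qed
    ultimately show ?thesis by blast
  qed
qed

lemma mono_const:
  assumes fV: "finite V" and sgr: "simple_graph V F" and kc: "k_connected V F k" and k2: "2 \<le> k"
  shows "mono_k_conn V F k (\<lambda>_. 0)"
  unfolding mono_k_conn_def
proof (intro ballI impI)
  fix u v assume "u \<in> V" "v \<in> V" "u \<noteq> v"
  then obtain P where P: "card P = k" "\<forall>xs\<in>P. is_path V F xs u v"
    "\<forall>xs\<in>P. \<forall>ys\<in>P. xs \<noteq> ys \<longrightarrow> interior xs \<inter> interior ys = {}"
    using kconn_paths[OF fV sgr kc k2] by blast
  show "\<exists>P. card P = k \<and> (\<forall>xs\<in>P. is_path V F xs u v \<and> (\<exists>col. \<forall>e\<in>path_edges xs. (0::nat) = col)) \<and>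
           (\<forall>xs\<in>P. \<forall>ys\<in>P. xs \<noteq> ys \<longrightarrow> interior xs \<inter> interior ys = {})"
    using P by blast
qed

lemma path_edges_sub: "is_path V F xs u v \<Longrightarrow> path_edges xs \<subseteq> F"
  unfolding is_path_def path_edges_def by blast

lemma is_path_mono: "is_path V F xs u v \<Longrightarrow> F \<subseteq> E \<Longrightarrow> is_path V E xs u v"
  unfolding is_path_def by blast

theorem mainTheorem1:
  fixes V :: "'a set" and E F :: "'a set set" and k :: nat
  assumes "k \<ge> 2"
    and "simple_graph V E"
    and "k_connected V E k"
    and "min_spanning_k_conn V E k F"
  shows "card E - card F + h V E k \<le> mc V E k \<and>
         card E - card F + 1 \<le> card E - card F + h V E k"
proof -
  note k2 = assms(1) and sgr = assms(2) and msF = assms(4)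
  have fV: "finite V" using sgr unfolding simple_graph_def by blast
  have EP: "E \<subseteq> Pow V"
  proof
    fix e assume "e \<in> E"
    then obtain x y where "x \<in> V" "y \<in> V" "e = {x,y}" using sgr unfolding simple_graph_def by blast
    then show "e \<in> Pow V" by simp
  qed
  have fE: "finite E" using finite_subset[OF EP] fV by simp
  define M where "M = {F'. min_spanning_k_conn V E k F'}"
  have FM: "F \<in> M" using msF M_def by simp
  have fM: "finite M"
  proof -
    have "M \<subseteq> Pow E" unfolding M_def min_spanning_k_conn_def by blast
    then show ?thesis using fE finite_subset by (metis finite_Pow_iff)
  qed
  have hset: "{mc V F' k | F'. min_spanning_k_conn V E k F'} = (\<lambda>F'. mc V F' k) ` M"
    unfolding M_def by blast
  have "h V E k \<in> (\<lambda>F'. mc V F' k) ` M"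
    unfolding h_def hset using fM FM by (intro Max_in) auto
  then obtain F0 where F0: "F0 \<in> M" "h V E k = mc V F0 k" by blast
  have F0E: "F0 \<subseteq> E" and kc0: "k_connected V F0 k" using F0(1) unfolding M_def min_spanning_k_conn_def by auto
  have cF0: "card F0 = card F"
  proof -
    have "card F0 \<le> card F" using F0(1) msF unfolding M_def min_spanning_k_conn_def by blast
    moreover have "card F \<le> card F0" using F0(1) msF unfolding M_def min_spanning_k_conn_def by blast
    ultimately show ?thesis by simp
  qed
  have fF0: "finite F0" using F0E fE finite_subset by blast
  have sg0: "simple_graph V F0" using sgr F0E unfolding simple_graph_def by blast
  define C0 where "C0 = {card (c ` F0) | c. mono_k_conn V F0 k c}"
  have fC0: "finite C0"
  proof -
    have "C0 \<subseteq> {..card F0}" unfolding C0_def using card_image_le[OF fF0] by auto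
    then show ?thesis using finite_subset by blast
  qed
  have "card ((\<lambda>_. 0::nat) ` F0) \<in> C0" unfolding C0_def using mono_const[OF fV sg0 kc0 k2] by blast
  then have "C0 \<noteq> {}" by blast
  then have "Max C0 \<in> C0" using fC0 by (rule Max_in[rotated])
  then obtain c0 where c0: "mono_k_conn V F0 k c0" "Max C0 = card (c0 ` F0)" unfolding C0_def by blast
  have hc0: "h V E k = card (c0 ` F0)" using F0(2) c0(2) unfolding mc_def C0_def by simp
  obtain gb where gb: "bij_betw gb (E - F0) {0..<card (E - F0)}"
    using ex_bij_betw_finite_nat[of "E - F0"] fE by blast
  have ginj: "inj_on gb (E - F0)" using gb bij_betw_def by blast
  define N where "N = Suc (Max (c0 ` F0))"
  have cN: "c0 e < N" if "e \<in> F0" for e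
  proof -
    have "c0 e \<le> Max (c0 ` F0)" using that fF0 by simp
    then show ?thesis unfolding N_def by simp
  qed
  define c' where "c' = (\<lambda>e. if e \<in> F0 then c0 e else N + gb e)"
  have im: "c' ` E = c0 ` F0 \<union> (\<lambda>e. N + gb e) ` (E - F0)"
  proof -
    have "E = F0 \<union> (E - F0)" using F0E by blast
    then have "c' ` E = c' ` F0 \<union> c' ` (E - F0)" by (metis image_Un)
    moreover have "c' ` F0 = c0 ` F0" unfolding c'_def by simp
    moreover have "c' ` (E - F0) = (\<lambda>e. N + gb e) ` (E - F0)" unfolding c'_def by simp
    ultimately show ?thesis by simp
  qed
  have disj: "c0 ` F0 \<inter> (\<lambda>e. N + gb e) ` (E - F0) = {}" using cN by fastforce
  have inj2: "inj_on (\<lambda>e. N + gb e) (E - F0)" using ginj unfolding inj_on_def by simp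
  have cc': "card (c' ` E) = card (c0 ` F0) + card (E - F0)"
    unfolding im using card_Un_disjoint[OF _ _ disj] fF0 fE card_image[OF inj2] by simp
  have mk: "mono_k_conn V E k c'"
    unfolding mono_k_conn_def
  proof (intro ballI impI)
    fix u v assume uv: "u \<in> V" "v \<in> V" "u \<noteq> v"
    then obtain P where P: "card P = k"
      "\<forall>xs\<in>P. is_path V F0 xs u v \<and> (\<exists>col. \<forall>e\<in>path_edges xs. c0 e = col)"
      "\<forall>xs\<in>P. \<forall>ys\<in>P. xs \<noteq> ys \<longrightarrow> interior xs \<inter> interior ys = {}"
      using c0(1) unfolding mono_k_conn_def by blast
    have "\<forall>xs\<in>P. is_path V E xs u v \<and> (\<exists>col. \<forall>e\<in>path_edges xs. c' e = col)"
    proof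
      fix xs assume xs: "xs \<in> P"
      then have p: "is_path V F0 xs u v" and "\<exists>col. \<forall>e\<in>path_edges xs. c0 e = col" using P(2) by auto
      then obtain col where col: "\<forall>e\<in>path_edges xs. c0 e = col" by blast
      have "path_edges xs \<subseteq> F0" using path_edges_sub[OF p] .
      then have "\<forall>e\<in>path_edges xs. c' e = col" using col unfolding c'_def by auto
      then show "is_path V E xs u v \<and> (\<exists>col. \<forall>e\<in>path_edges xs. c' e = col)"
        using is_path_mono[OF p F0E] by blast
    qed
    then show "\<exists>P. card P = k \<and> (\<forall>xs\<in>P. is_path V E xs u v \<and> (\<exists>col. \<forall>e\<in>path_edges xs. c' e = col)) \<and>
           (\<forall>xs\<in>P. \<forall>ys\<in>P. xs \<noteq> ys \<longrightarrow> interior xs \<inter> interior ys = {})"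
      using P(1,3) by blast
  qed
  define CE where "CE = {card (c ` E) | c. mono_k_conn V E k c}"
  have fCE: "finite CE"
  proof -
    have "CE \<subseteq> {..card E}" unfolding CE_def using card_image_le[OF fE] by auto
    then show ?thesis using finite_subset by blast
  qed
  have "card (c' ` E) \<in> CE" unfolding CE_def using mk by blast
  then have le: "card (c' ` E) \<le> mc V E k" unfolding mc_def CE_def[symmetric] using fCE by simp
  have cd: "card (E - F0) = card E - card F" using card_Diff_subset[OF fF0 F0E] cF0 by simp
  have part1: "card E - card F + h V E k \<le> mc V E k" using le cc' cd hc0 by simp
  have F0ne: "F0 \<noteq> {}"
  proof -
    have kk: "card V \<ge> k + 1 \<and> (\<forall>S. S \<subseteq> V \<and> card S \<le> k - 1 \<longrightarrow>
        connected_graph (V - S) {e\<in>F0. e \<inter> S = {}})" using kc0 unfolding k_connected_def .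
    then have cV: "card V \<ge> k + 1" by blast
    have "connected_graph (V - {}) {e\<in>F0. e \<inter> {} = {}}" using kk[THEN conjunct2, rule_format, of "{}"] by simp
    then have con: "connected_graph V F0" by simp
    have c2: "2 \<le> card V" using cV k2 by simp
    obtain T where T: "T \<subseteq> V" "card T = 2" using obtain_subset_with_card_n[OF c2] by blast
    then obtain u v where "T = {u,v}" "u \<noteq> v" by (auto simp: card_2_iff)
    then have uv: "u \<in> V" "v \<in> V" "u \<noteq> v" using T(1) by auto
    then obtain xs where xs: "is_path V F0 xs u v" using con unfolding connected_graph_def by blast
    have sub: "F0 \<subseteq> F0" by simp
    note pf = path_facts[OF xs sub uv(3)]
    have "{xs!0, xs!1} \<in> F0" using edge0[OF pf(1) pf(2)] .
    then show ?thesis by blast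
  qed
  have "card (c0 ` F0) \<ge> 1" using F0ne fF0 by (simp add: Suc_le_eq card_gt_0_iff)
  then have part2: "card E - card F + 1 \<le> card E - card F + h V E k" using hc0 by simp
  show ?thesis using part1 part2 by blast
qed

end
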